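(* Let $\rho$ be a Borel probability measure on $\mathsf{X}$ and let $X$ be the process on $\mathsf{X}$ constructed from $\rho$ as in the context. Then $\hat{X}:=\pi\circ X$ is a pure jump-type continuous-time Markov process on $\hat{\mathsf{X}}=\{0,1,\dots,n\}$ with rate kernel $\hat{\alpha}$ and initial distribution $\rho\circ\pi^{-1}$.
   Context: Fix $\theta_a,\theta_d>0$, positive integers $n,N$, $E=\mathbb{R}^N$, and a Borel probability measure $\eta$ on $E$ with finite mean. $[k]=\{0,\dots,k-1\}$; $|\psi|=\sum_{i\in[n]}\psi(i)$. State space: $\mathsf{X}=\{(\psi,\mathbf{v})\in\{0,1\}^{[n]}\times E^{[n+1]}:\sum_{i\in[n]}\psi(i)(\mathbf{v}(i)-\mathbf{v}(n))=0\}$ (subspace of the product topology, discrete on $\{0,1\}$, Euclidean on $E$). $\pi(\psi,\mathbf{v})=|\psi|\in\hat{\mathsf{X}}=\{0,\dots,n\}$. For $i\in[n]$: $r_i(\psi)=\frac{\theta_d\psi(i)+\theta_a(1-\psi(i))}{\theta_d|\psi|+\theta_a(n-|\psi|)}$; $s_i(\psi)$ agrees with $\psi$ except at $i$, where $s_i(\psi)(i)=1-\psi(i)$. For $\mathsf{x}=(\psi,\mathbf{v})\in\mathsf{X}$, $\lambda_i^{\mathsf{x}}$ is the law of $(s_i(\psi),\mathbf{w})$ with $\mathbf{w}(j)=\mathbf{v}(j)$ for $j\in[n]\setminus\{i\}$ and $(\mathbf{w}(i),\mathbf{w}(n))$ equal to $(\mathbf{v}(i),\mathbf{v}(n))$ if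 $|\psi|=\psi(i)=1$; $(\mathbf{v}(i),\mathbf{v}(n)-\frac{\mathbf{v}(i)-\mathbf{v}(n)}{|\psi|-1})$ if $|\psi|>\psi(i)=1$; $(\mathbf{x}+\mathbf{v}(n),\frac{\mathbf{x}}{|\psi|+1}+\mathbf{v}(n))$ with $\mathbf{x}\sim\eta$ if $\psi(i)=0$. $\mu(\mathsf{x},B)=\sum_{i\in[n]}r_i(\psi)\lambda_i^{\mathsf{x}}(B)$; $c(\psi,\mathbf{v})=\theta_d|\psi|+\theta_a(n-|\psi|)$. On $\hat{\mathsf{X}}$: $\hat{\mu}(i,\cdot)=\frac{\theta_d i\,\delta_{i-1}+\theta_a(n-i)\,\delta_{i+1}}{\theta_d i+\theta_a(n-i)}$, $\hat{c}(i)=\theta_d i+\theta_a(n-i)$, $\hat{\alpha}(i,B)=\hat{c}(i)\hat{\mu}(i,B)$. Construction of $X$: $Y$ is a discrete-time Markov chain on $\mathsf{X}$ with transition kernel $\mu$ and $Y_0\sim\rho$; $(\gamma_k)_{k\ge1}$ i.i.d. standard exponential with $\{Y,\gamma_1,\gamma_2,\dots\}$ independent; $\tau_k=\sum_{i=1}^k\gamma_i/c(Y_{i-1})$; $X_t=Y_k$ for $t\in[\tau_k,\tau_{k+1})$. A pure jump-type continuous-time Markov process with rate kernel $\hat\alpha$ is a Markov process with right-continuous piecewise constant paths that holds in state $i$ for an exponential time of rate $\hat c(i)$ and then jumps according to $\hat\mu(i,\cdot)$. *)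

theory Defs
  imports "HOL-Probability.Probability"
begin

text \<open>States: pairs (psi, v) with psi :: nat => bool (only indices < n are relevant,
  the others are fixed to False) and v :: nat => E (only indices <= n relevant, the
  others fixed to 0), E = real^'N.  The coordinates outside the index ranges are frozen,
  so the state space below is homeomorphic to the subspace of
  {0,1}^[n] x E^[n+1] from the paper.\<close>

type_synonym 'N state = "(nat \<Rightarrow> bool) \<times> (nat \<Rightarrow> real ^ 'N)"

definition card_psi :: "nat \<Rightarrow> (nat \<Rightarrow> bool) \<Rightarrow> nat" where
  "card_psi n psi = card {i. i < n \<and> psi i}"

definition Xset :: "nat \<Rightarrow> ('N::finite) state set" where
  "Xset n = {(psi, v). (\<forall>i\<ge>n. \<not> psi i) \<and> (\<forall>i>n. v i = 0) \<and>
      (\<Sum>i<n. of_bool (psi i) *\<^sub>R (v i - v n)) = 0}"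

definition Xspace :: "nat \<Rightarrow> ('N::finite) state measure" where
  "Xspace n = restrict_space borel (Xset n)"

definition proj :: "nat \<Rightarrow> ('N::finite) state \<Rightarrow> nat" where
  "proj n x = card_psi n (fst x)"

definition rate_c :: "nat \<Rightarrow> real \<Rightarrow> real \<Rightarrow> (nat \<Rightarrow> bool) \<Rightarrow> real" where
  "rate_c n ta td psi = td * real (card_psi n psi) + ta * real (n - card_psi n psi)"

definition r_i :: "nat \<Rightarrow> real \<Rightarrow> real \<Rightarrow> nat \<Rightarrow> (nat \<Rightarrow> bool) \<Rightarrow> real" where
  "r_i n ta td i psi = (td * of_bool (psi i) + ta * (1 - of_bool (psi i))) / rate_c n ta td psi"

definition s_i :: "nat \<Rightarrow> (nat \<Rightarrow> bool) \<Rightarrow> (nat \<Rightarrow> bool)" where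
  "s_i i psi = psi(i := \<not> psi i)"

definition lam :: "nat \<Rightarrow> (real ^ ('N::finite)) measure \<Rightarrow> ('N::finite) state \<Rightarrow> nat \<Rightarrow> ('N::finite) state measure" where
  "lam n eta x i = (case x of (psi, v) \<Rightarrow>
     (if psi i then
        (if card_psi n psi = 1 then return (Xspace n) (s_i i psi, v)
         else return (Xspace n) (s_i i psi,
                v(n := v n - (1 / (real (card_psi n psi) - 1)) *\<^sub>R (v i - v n))))
      else distr eta (Xspace n) (\<lambda>y. (s_i i psi,
                v(i := y + v n, n := (1 / (real (card_psi n psi) + 1)) *\<^sub>R y + v n)))))"

definition mu :: "nat \<Rightarrow> real \<Rightarrow> real \<Rightarrow> (real ^ ('N::finite)) measure \<Rightarrow> ('N::finite) state \<Rightarrow> ('N::finite) state set \<Rightarrow> real" where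
  "mu n ta td eta x B = (\<Sum>i<n. r_i n ta td i (fst x) * measure (lam n eta x i) B)"

definition hat_c :: "nat \<Rightarrow> real \<Rightarrow> real \<Rightarrow> nat \<Rightarrow> real" where
  "hat_c n ta td i = td * real i + ta * real (n - i)"

definition hat_mu :: "nat \<Rightarrow> real \<Rightarrow> real \<Rightarrow> nat \<Rightarrow> nat set \<Rightarrow> real" where
  "hat_mu n ta td i B = (td * real i * indicator B (i - 1) + ta * real (n - i) * indicator B (i + 1))
                        / (td * real i + ta * real (n - i))"

definition hat_alpha :: "nat \<Rightarrow> real \<Rightarrow> real \<Rightarrow> nat \<Rightarrow> nat set \<Rightarrow> real" where
  "hat_alpha n ta td i B = hat_c n ta td i * hat_mu n ta td i B"

definition markov_chain ::
  "'w measure \<Rightarrow> 'a measure \<Rightarrow> ('a \<Rightarrow> 'a set \<Rightarrow> real) \<Rightarrow> 'a measure \<Rightarrow> (nat \<Rightarrow> 'w \<Rightarrow> 'a) \<Rightarrow> bool" where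
  "markov_chain M S K rho Y \<longleftrightarrow>
     (\<forall>k. Y k \<in> measurable M S) \<and> distr M S (Y 0) = rho \<and>
     (\<forall>k B. (\<forall>j\<le>Suc k. B j \<in> sets S) \<longrightarrow>
        measure M {\<omega> \<in> space M. \<forall>j\<le>Suc k. Y j \<omega> \<in> B j} =
        (\<integral>\<omega>. indicator {\<omega> \<in> space M. \<forall>j\<le>k. Y j \<omega> \<in> B j} \<omega> * K (Y k \<omega>) (B (Suc k)) \<partial>M))"

text \<open>Jump times tau_k = sum_(i=1..k) gamma_i / c(Y_(i-1)) (gamma indexed from 1).\<close>
definition jump_time :: "nat \<Rightarrow> real \<Rightarrow> real \<Rightarrow> (nat \<Rightarrow> 'w \<Rightarrow> ('N::finite) state) \<Rightarrow> (nat \<Rightarrow> 'w \<Rightarrow> real)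
    \<Rightarrow> nat \<Rightarrow> 'w \<Rightarrow> real" where
  "jump_time n ta td Y \<gamma> k \<omega> = (\<Sum>i=1..k. \<gamma> i \<omega> / rate_c n ta td (fst (Y (i - 1) \<omega>)))"

text \<open>X_t = Y_k for t in [tau_k, tau_(k+1)).  On the null event where the jump times do not
  exhaust [0,infinity) (explosion) the process is not defined in the paper; we set X_t := Y_0
  there (an arbitrary convention that does not affect any law).\<close>
definition Xproc :: "nat \<Rightarrow> real \<Rightarrow> real \<Rightarrow> (nat \<Rightarrow> 'w \<Rightarrow> ('N::finite) state) \<Rightarrow> (nat \<Rightarrow> 'w \<Rightarrow> real)
    \<Rightarrow> real \<Rightarrow> 'w \<Rightarrow> ('N::finite) state" where
  "Xproc n ta td Y \<gamma> t \<omega> =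
     (let \<tau> = (\<lambda>k. jump_time n ta td Y \<gamma> k \<omega>) in
      if \<exists>k. t < \<tau> (Suc k) then Y (LEAST k. t < \<tau> (Suc k)) \<omega> else Y 0 \<omega>)"

text \<open>Z (indexed by t >= 0) is a pure jump-type continuous-time Markov process on the
  countable state set S with rate kernel alpha and initial distribution nu
  (jump chain / holding time description; holding rate c(i) = alpha(i,S),
  jump distribution alpha(i,{j}) / c(i)): almost surely the paths are right-continuous
  and piecewise constant, with jump times 0 = J_0 < J_1 < ... tending to infinity, and
  the jump chain and holding times have the joint law
  P(Z_(J_0)=i_0,...,Z_(J_k)=i_k, J_1-J_0 > s_0, ..., J_k - J_(k-1) > s_(k-1))
    = nu{i_0} * prod_(j<k) (alpha(i_j,{i_(j+1)})/c(i_j)) * exp(-c(i_j) s_j),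
  i.e. the process holds in state i for an Exp(c(i)) time, independently of the past,
  then jumps according to alpha(i,.)/c(i).  (This description is intended for kernels
  without absorbing states and without self-jumps, which is the case here.)\<close>
definition pure_jump_markov ::
  "'w measure \<Rightarrow> (real \<Rightarrow> 'w \<Rightarrow> nat) \<Rightarrow> nat set \<Rightarrow> (nat \<Rightarrow> nat set \<Rightarrow> real) \<Rightarrow> nat measure \<Rightarrow> bool" where
  "pure_jump_markov M Z S alpha nu \<longleftrightarrow>
     prob_space M \<and> (\<forall>t\<ge>0. Z t \<in> measurable M (count_space S)) \<and>
     (\<exists>J :: nat \<Rightarrow> 'w \<Rightarrow> real. (\<forall>k. J k \<in> borel_measurable M) \<and>
        (AE \<omega> in M. J 0 \<omega> = 0 \<and> (\<forall>k. J k \<omega> < J (Suc k) \<omega>) \<and>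
           filterlim (\<lambda>k. J k \<omega>) at_top sequentially \<and>
           (\<forall>k t. J k \<omega> \<le> t \<and> t < J (Suc k) \<omega> \<longrightarrow> Z t \<omega> = Z (J k \<omega>) \<omega>) \<and>
           (\<forall>k. Z (J (Suc k) \<omega>) \<omega> \<noteq> Z (J k \<omega>) \<omega>)) \<and>
        (\<forall>k (i :: nat \<Rightarrow> nat) (s :: nat \<Rightarrow> real). (\<forall>j\<le>k. i j \<in> S) \<longrightarrow> (\<forall>j. 0 \<le> s j) \<longrightarrow>
           measure M {\<omega> \<in> space M. (\<forall>j\<le>k. Z (J j \<omega>) \<omega> = i j) \<and>
                                    (\<forall>j<k. J (Suc j) \<omega> - J j \<omega> > s j)}
           = measure nu {i 0} *
             (\<Prod>j<k. (alpha (i j) {i (Suc j)} / alpha (i j) S) * exp (- alpha (i j) S * s j))))"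

end

theory Submission
  imports Defs
begin


lemma fst_comp_meas[measurable]: "(\<lambda>x::('N::finite) state. fst x i) \<in> measurable borel (count_space UNIV)"
proof -
  have "continuous_on UNIV (\<lambda>x::('N::finite) state. fst x i)"
    by (intro continuous_intros continuous_on_product_then_coordinatewise continuous_on_fst)
  then have "(\<lambda>x::('N::finite) state. fst x i) \<in> borel_measurable borel"
    by (rule borel_measurable_continuous_onI)
  then show ?thesis
    by (simp add: measurable_def sets_borel_eq_count_space space_borel)
qed

lemma card_psi_sum: "card_psi n psi = (\<Sum>i<n. if psi i then 1 else 0)"
  unfolding card_psi_def by (simp add: sum.If_cases Int_def)

lemma meas_nat_add:
  assumes "f \<in> measurable M (count_space UNIV)" "g \<in> measurable M (count_space UNIV)"
  shows "(\<lambda>x. f x + g x :: nat) \<in> measurable M (count_space UNIV)"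
  using measurable_compose_countable[where f = "\<lambda>i x. i + g x" and g = f, OF measurable_compose[OF assms(2)]] assms
  by simp

lemma proj_meas_borel: "proj n \<in> measurable (borel :: ('N::finite) state measure) (count_space UNIV)"
proof -
  have "(\<lambda>x::('N::finite) state. \<Sum>i<m. if fst x i then 1 else 0 :: nat) \<in> measurable borel (count_space UNIV)" for m
  proof (induction m)
    case 0 then show ?case by simp
  next
    case (Suc m)
    have "(\<lambda>x::('N::finite) state. if fst x m then 1 else 0 :: nat) \<in> measurable borel (count_space UNIV)"
      by measurable
    with Suc show ?case by (simp add: meas_nat_add)
  qed
  then show ?thesis unfolding proj_def card_psi_sum[abs_def] by simp
qed

lemma proj_meas[measurable]: "proj n \<in> measurable (Xspace n) (count_space UNIV)"
  unfolding Xspace_def by (rule measurable_restrict_space1) (rule proj_meas_borel)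

lemma space_Xspace: "space (Xspace n) = Xset n"
  unfolding Xspace_def by (simp add: space_restrict_space space_borel)




lemma real_card_psi: "real (card_psi n psi) = (\<Sum>j<n. of_bool (psi j))"
  unfolding card_psi_sum by (simp add: of_bool_def if_distrib cong: if_cong)

lemma card_psi_le: "card_psi n psi \<le> n"
  unfolding card_psi_def by (rule order_trans[OF card_mono[of "{..<n}"]]) auto

lemma card_s_i:
  assumes "i < n"
  shows "card_psi n (s_i i psi) = (if psi i then card_psi n psi - 1 else card_psi n psi + 1)"
proof -
  let ?S = "{j. j < n \<and> psi j}"
  have fin: "finite ?S" by simp
  show ?thesis
  proof (cases "psi i")
    case True
    then have "{j. j < n \<and> s_i i psi j} = ?S - {i}" by (auto simp: s_i_def)
    then show ?thesis using True assms fin by (simp add: card_psi_def)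
  next
    case False
    then have "{j. j < n \<and> s_i i psi j} = insert i ?S" using assms by (auto simp: s_i_def)
    then show ?thesis using False assms fin by (simp add: card_psi_def)
  qed
qed

lemma Xset_flip_false:
  assumes x: "(psi, v) \<in> Xset n" and i: "i < n" and ni: "\<not> psi i"
  shows "(s_i i psi, v(i := y + v n, n := (1 / (real (card_psi n psi) + 1)) *\<^sub>R y + v n)) \<in> Xset n"
proof -
  define m where "m = card_psi n psi"
  define a where "a = 1 / (real m + 1)"
  define v' where "v' = v(i := y + v n, n := a *\<^sub>R y + v n)"
  have s0: "(\<Sum>j<n. of_bool (psi j) *\<^sub>R (v j - v n)) = 0" using x by (simp add: Xset_def)
  have rm: "real m = (\<Sum>j<n. of_bool (psi j))" unfolding m_def by (rule real_card_psi)
  have "(\<Sum>j<n. of_bool (s_i i psi j) *\<^sub>R (v' j - v' n)) =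
        of_bool (s_i i psi i) *\<^sub>R (v' i - v' n) + (\<Sum>j\<in>{..<n}-{i}. of_bool (s_i i psi j) *\<^sub>R (v' j - v' n))"
    using i by (simp add: sum.remove)
  also have "(\<Sum>j\<in>{..<n}-{i}. of_bool (s_i i psi j) *\<^sub>R (v' j - v' n)) = (\<Sum>j\<in>{..<n}-{i}. of_bool (psi j) *\<^sub>R (v j - v n - a *\<^sub>R y))"
    by (rule sum.cong) (auto simp: s_i_def v'_def)
  also have "\<dots> = (\<Sum>j<n. of_bool (psi j) *\<^sub>R (v j - v n - a *\<^sub>R y))"
    using i ni by (simp add: sum.remove)
  also have "\<dots> = (\<Sum>j<n. of_bool (psi j) *\<^sub>R (v j - v n)) - (\<Sum>j<n. of_bool (psi j)) *\<^sub>R (a *\<^sub>R y)"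
    by (simp add: scaleR_diff_right sum_subtractf scaleR_sum_left sum_distrib_right del: sum_of_bool_eq sum_of_bool_mult_eq)
  also have "\<dots> = - (real m * a) *\<^sub>R y" using s0 rm by simp
  also have "of_bool (s_i i psi i) *\<^sub>R (v' i - v' n) = (1 - a) *\<^sub>R y"
    using i ni by (simp add: s_i_def v'_def algebra_simps)
  finally have "(\<Sum>j<n. of_bool (s_i i psi j) *\<^sub>R (v' j - v' n)) = (1 - a - real m * a) *\<^sub>R y"
    by (simp add: algebra_simps)
  also have "1 - a - real m * a = 0" unfolding a_def by (simp add: field_simps)
  finally have "(\<Sum>j<n. of_bool (s_i i psi j) *\<^sub>R (v' j - v' n)) = 0" by simp
  moreover have "\<forall>j\<ge>n. \<not> s_i i psi j" using x i by (auto simp: Xset_def s_i_def)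
  moreover have "\<forall>j>n. v' j = 0" using x i by (auto simp: Xset_def v'_def)
  ultimately show ?thesis unfolding Xset_def v'_def a_def m_def by simp
qed

lemma Xset_flip_true:
  assumes x: "(psi, v) \<in> Xset n" and i: "i < n" and pi: "psi i" and m1: "card_psi n psi \<noteq> 1"
  shows "(s_i i psi, v(n := v n - (1 / (real (card_psi n psi) - 1)) *\<^sub>R (v i - v n))) \<in> Xset n"
proof -
  define m where "m = card_psi n psi"
  define b where "b = 1 / (real m - 1)"
  define v' where "v' = v(n := v n - b *\<^sub>R (v i - v n))"
  have s0: "(\<Sum>j<n. of_bool (psi j) *\<^sub>R (v j - v n)) = 0" using x by (simp add: Xset_def)
  have rm: "real m = (\<Sum>j<n. of_bool (psi j))" unfolding m_def by (rule real_card_psi)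
  have "(\<Sum>j<n. of_bool (psi j) *\<^sub>R (v j - v n)) = (v i - v n) + (\<Sum>j\<in>{..<n}-{i}. of_bool (psi j) *\<^sub>R (v j - v n))"
    using i pi by (simp add: sum.remove del: sum_of_bool_eq)
  then have s1: "(\<Sum>j\<in>{..<n}-{i}. of_bool (psi j) *\<^sub>R (v j - v n)) = - (v i - v n)" using s0 by (simp add: algebra_simps)
  have "(\<Sum>j<n. of_bool (psi j)) = (1::real) + (\<Sum>j\<in>{..<n}-{i}. of_bool (psi j))"
    using i pi by (simp add: sum.remove del: sum_of_bool_eq)
  then have r1: "(\<Sum>j\<in>{..<n}-{i}. of_bool (psi j)) = real m - 1" using rm by simp
  have "(\<Sum>j<n. of_bool (s_i i psi j) *\<^sub>R (v' j - v' n)) =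
        of_bool (s_i i psi i) *\<^sub>R (v' i - v' n) + (\<Sum>j\<in>{..<n}-{i}. of_bool (s_i i psi j) *\<^sub>R (v' j - v' n))"
    using i by (simp add: sum.remove)
  also have "(\<Sum>j\<in>{..<n}-{i}. of_bool (s_i i psi j) *\<^sub>R (v' j - v' n)) = (\<Sum>j\<in>{..<n}-{i}. of_bool (psi j) *\<^sub>R ((v j - v n) + b *\<^sub>R (v i - v n)))"
    by (rule sum.cong) (auto simp: s_i_def v'_def algebra_simps)
  also have "\<dots> = (\<Sum>j\<in>{..<n}-{i}. of_bool (psi j) *\<^sub>R (v j - v n)) + (\<Sum>j\<in>{..<n}-{i}. of_bool (psi j)) *\<^sub>R (b *\<^sub>R (v i - v n))"
    by (simp add: scaleR_add_right sum.distrib scaleR_sum_left sum_distrib_right del: sum_of_bool_eq sum_of_bool_mult_eq)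
  also have "\<dots> = (-1 + (real m - 1) * b) *\<^sub>R (v i - v n)" by (simp only: s1 r1) (simp add: algebra_simps)
  finally have eq: "(\<Sum>j<n. of_bool (s_i i psi j) *\<^sub>R (v' j - v' n)) = (-1 + (real m - 1) * b) *\<^sub>R (v i - v n)"
    using pi by (simp add: s_i_def)
  have "(-1 + (real m - 1) * b) = 0" using m1 unfolding b_def m_def by (simp add: field_simps)
  moreover have "\<forall>j\<ge>n. \<not> s_i i psi j" using x i by (auto simp: Xset_def s_i_def)
  moreover have "\<forall>j>n. v' j = 0" using x i by (auto simp: Xset_def v'_def)
  ultimately show ?thesis using eq unfolding Xset_def v'_def b_def m_def by simp
qed

lemma Xset_flip_true_one:
  assumes x: "(psi, v) \<in> Xset n" and i: "i < n" and pi: "psi i" and m1: "card_psi n psi = 1"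
  shows "(s_i i psi, v) \<in> Xset n"
proof -
  have "{j. j < n \<and> psi j} = {i}"
    using m1 i pi unfolding card_psi_def by (metis (mono_tags, lifting) card_1_singletonE mem_Collect_eq singletonD)
  then have "\<forall>j<n. \<not> s_i i psi j" by (auto simp: s_i_def)
  then have "(\<Sum>j<n. of_bool (s_i i psi j) *\<^sub>R (v j - v n)) = 0" by simp
  moreover have "\<forall>j\<ge>n. \<not> s_i i psi j" using x i by (auto simp: Xset_def s_i_def)
  ultimately show ?thesis using x unfolding Xset_def by simp
qed




definition Bset :: "nat \<Rightarrow> nat set \<Rightarrow> ('N::finite) state set" where
  "Bset n C = {y \<in> Xset n. card_psi n (fst y) \<in> C}"

lemma Bset_sets: "Bset n C \<in> sets (Xspace n)"
proof -
  have "proj n -` C \<inter> space (Xspace n) \<in> sets (Xspace n)"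
    by (rule measurable_sets[OF proj_meas]) simp
  moreover have "proj n -` C \<inter> space (Xspace n) = Bset n C"
    by (auto simp: space_Xspace Bset_def proj_def)
  ultimately show ?thesis by metis
qed

lemma flip_cont:
  "continuous_on UNIV (\<lambda>y::real^'N. (psi', v(i := y + v n, n := a *\<^sub>R y + v n)))"
proof -
  have "continuous_on UNIV (\<lambda>y::real^'N. (v(i := y + v n, n := a *\<^sub>R y + v n)) j)" for j
    by (cases "j = n"; cases "j = i") (auto intro!: continuous_intros)
  then show ?thesis
    by (intro continuous_on_Pair continuous_on_const continuous_on_coordinatewise_then_product) auto
qed

lemma lam_measure:
  assumes eta: "prob_space eta" "sets eta = sets borel"
    and x: "x \<in> Xset n" and i: "i < n"
  shows "measure (lam n eta x i) (Bset n C) = indicator C (card_psi n (s_i i (fst x)))"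
proof -
  obtain psi v where xv: "x = (psi, v)" by (cases x)
  have B: "Bset n C \<in> sets (Xspace n)" by (rule Bset_sets)
  show ?thesis
  proof (cases "psi i")
    case True
    show ?thesis
    proof (cases "card_psi n psi = 1")
      case True
      with \<open>psi i\<close> have "lam n eta x i = return (Xspace n) (s_i i psi, v)" by (simp add: lam_def xv)
      moreover have "(s_i i psi, v) \<in> Xset n" using Xset_flip_true_one x i \<open>psi i\<close> True xv by blast
      ultimately show ?thesis by (simp add: measure_return[OF B]) (simp add: Bset_def xv indicator_def)
    next
      case False
      with \<open>psi i\<close> have "lam n eta x i = return (Xspace n) (s_i i psi,
                v(n := v n - (1 / (real (card_psi n psi) - 1)) *\<^sub>R (v i - v n)))" by (simp add: lam_def xv)
      moreover have "(s_i i psi, v(n := v n - (1 / (real (card_psi n psi) - 1)) *\<^sub>R (v i - v n))) \<in> Xset n"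
        using Xset_flip_true x i \<open>psi i\<close> False xv by blast
      ultimately show ?thesis by (simp add: measure_return[OF B]) (simp add: Bset_def xv indicator_def)
    qed
  next
    case False
    define f where "f = (\<lambda>y. (s_i i psi,
                v(i := y + v n, n := (1 / (real (card_psi n psi) + 1)) *\<^sub>R y + v n)))"
    have lam: "lam n eta x i = distr eta (Xspace n) f" using False by (simp add: lam_def xv f_def)
    have fX: "f y \<in> Xset n" for y unfolding f_def using Xset_flip_false x i False xv by blast
    have fb: "f \<in> borel_measurable borel" unfolding f_def
      by (rule borel_measurable_continuous_onI) (rule flip_cont)
    have fm: "f \<in> measurable eta (Xspace n)"
      unfolding Xspace_def
      by (rule measurable_restrict_space2) (use fX fb eta(2) in \<open>auto simp: measurable_cong_sets[OF eta(2) refl]\<close>)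
    have sp: "space eta = UNIV" using eta(2) by (metis sets_eq_imp_space_eq space_borel)
    have "f -` Bset n C \<inter> space eta = (if card_psi n (s_i i psi) \<in> C then UNIV else {})"
      using fX sp by (auto simp: Bset_def f_def)
    moreover have "measure (lam n eta x i) (Bset n C) = measure eta (f -` Bset n C \<inter> space eta)"
      unfolding lam by (rule measure_distr[OF fm B])
    ultimately show ?thesis
      using prob_space.prob_space[OF eta(1)] sp by (simp add: xv indicator_def)
  qed
qed




lemma card_not_psi: "card {i. i < n \<and> \<not> psi i} = n - card_psi n psi"
proof -
  have "{i. i < n \<and> \<not> psi i} = {..<n} - {i. i < n \<and> psi i}" by auto
  then show ?thesis unfolding card_psi_def by (simp only:) (subst card_Diff_subset, auto)
qed

lemma mu_lump:
  assumes eta: "prob_space eta" "sets eta = sets borel"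
    and x: "x \<in> Xset n"
  shows "mu n ta td eta x (Bset n C) = hat_mu n ta td (card_psi n (fst x)) C"
proof -
  define psi where "psi = fst x"
  define m where "m = card_psi n psi"
  define R where "R = rate_c n ta td psi"
  have "mu n ta td eta x (Bset n C) = (\<Sum>i<n. r_i n ta td i psi * indicator C (card_psi n (s_i i psi)))"
    unfolding mu_def psi_def using lam_measure[OF eta x] by simp
  also have "\<dots> = (\<Sum>i<n. if psi i then td / R * indicator C (m - 1) else ta / R * indicator C (m + 1))"
    by (rule sum.cong) (auto simp: r_i_def card_s_i R_def m_def)
  also have "\<dots> = real (card {i. i < n \<and> psi i}) * (td / R * indicator C (m - 1))
       + real (card {i. i < n \<and> \<not> psi i}) * (ta / R * indicator C (m + 1))"
    by (simp add: sum.If_cases Int_def Collect_conj_eq[symmetric] lessThan_def Compl_eq del: sum_of_bool_eq)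
  also have "\<dots> = hat_mu n ta td m C"
    unfolding card_not_psi hat_mu_def R_def rate_c_def m_def[symmetric] card_psi_def[symmetric]
    by (simp add: field_simps add_divide_distrib)
  finally show ?thesis unfolding m_def psi_def .
qed




lemma hat_c_pos:
  assumes a: "0 < n" "0 < ta" "0 < td" shows "0 < hat_c n ta td m"
proof (cases "m = 0")
  case False
  show ?thesis unfolding hat_c_def using False a by (intro add_pos_nonneg) auto
qed (use a in \<open>simp add: hat_c_def\<close>)

lemma rate_c_eq: "rate_c n ta td psi = hat_c n ta td (card_psi n psi)"
  unfolding rate_c_def hat_c_def ..

lemma hat_c_le: "0 < ta \<Longrightarrow> 0 < td \<Longrightarrow> m \<le> n \<Longrightarrow> hat_c n ta td m \<le> (ta + td) * real n"
  unfolding hat_c_def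
proof -
  assume a: "0 < ta" "0 < td" "m \<le> n"
  have "td * real m \<le> td * real n" using a by auto
  moreover have "ta * real (n - m) \<le> ta * real n" using a by auto
  ultimately show "td * real m + ta * real (n - m) \<le> (ta + td) * real n" by (simp add: algebra_simps)
qed

lemma hat_mu_self: "hat_mu n ta td m {m} = 0"
  unfolding hat_mu_def by (cases m) auto

lemma hat_alpha_S:
  assumes "0 < n" "0 < ta" "0 < td" "m \<le> n"
  shows "hat_alpha n ta td m {0..n} = hat_c n ta td m"
proof -
  have c: "td * real m + ta * real (n - m) > 0" using hat_c_pos[OF assms(1-3), of m] by (simp add: hat_c_def)
  have "hat_mu n ta td m {0..n} = 1"
  proof (cases "m = n")
    case True then show ?thesis using c assms unfolding hat_mu_def by auto
  next
    case False then show ?thesis using c assms(4) unfolding hat_mu_def by auto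
  qed
  then show ?thesis unfolding hat_alpha_def by simp
qed

lemma hat_alpha_ratio:
  assumes "0 < n" "0 < ta" "0 < td" "m \<le> n"
  shows "hat_alpha n ta td m {a} / hat_alpha n ta td m {0..n} = hat_mu n ta td m {a}"
  using hat_alpha_S[OF assms] hat_c_pos[OF assms(1-3), of m] unfolding hat_alpha_def by simp

locale P4 = prob_space M for M :: "'w measure" +
  fixes n :: nat and ta td :: real
    and eta :: "(real ^ ('N::finite)) measure"
    and rho :: "'N state measure"
    and Y :: "nat \<Rightarrow> 'w \<Rightarrow> 'N state"
    and \<gamma> :: "nat \<Rightarrow> 'w \<Rightarrow> real"
  assumes ta: "0 < ta" and td: "0 < td" and npos: "0 < n"
    and eta_prob: "prob_space eta" and eta_sets: "sets eta = sets borel"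
    and rho_sets: "sets rho = sets (Xspace n)"
    and MC: "markov_chain M (Xspace n) (mu n ta td eta) rho Y"
    and gexp: "\<And>k. 1 \<le> k \<Longrightarrow> distributed M lborel (\<gamma> k) (exponential_density 1)"
    and gind: "indep_vars (\<lambda>_. borel) \<gamma> {1..}"
    and YGind: "\<And>A B. A \<in> sets (Pi\<^sub>M UNIV (\<lambda>_. Xspace n)) \<Longrightarrow> B \<in> sets (Pi\<^sub>M {1..} (\<lambda>_. borel)) \<Longrightarrow>
           measure M {\<omega> \<in> space M. (\<lambda>k. Y k \<omega>) \<in> A \<and> (\<lambda>k\<in>{1..}. \<gamma> k \<omega>) \<in> B}
           = measure M {\<omega> \<in> space M. (\<lambda>k. Y k \<omega>) \<in> A} * measure M {\<omega> \<in> space M. (\<lambda>k\<in>{1..}. \<gamma> k \<omega>) \<in> B}"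
begin

lemma Y_meas[measurable]: "Y k \<in> measurable M (Xspace n)"
  using MC unfolding markov_chain_def by auto

lemma Y_in: "\<omega> \<in> space M \<Longrightarrow> Y k \<omega> \<in> Xset n"
  using measurable_space[OF Y_meas] space_Xspace by blast

lemma projY_meas[measurable]: "(\<lambda>\<omega>. proj n (Y k \<omega>)) \<in> measurable M (count_space UNIV)"
  by (rule measurable_compose[OF Y_meas proj_meas])

definition E :: "nat \<Rightarrow> (nat \<Rightarrow> nat set) \<Rightarrow> 'w set" where
  "E k C = {\<omega> \<in> space M. \<forall>j\<le>k. proj n (Y j \<omega>) \<in> C j}"

lemma E_sets[measurable]: "E k C \<in> events"
proof -
  have "E k C = space M \<inter> (\<Inter>j\<in>{..k}. (\<lambda>\<omega>. proj n (Y j \<omega>)) -` C j \<inter> space M)"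
    by (auto simp: E_def)
  also have "\<dots> \<in> events"
  proof -
    have *: "\<And>j. (\<lambda>\<omega>. proj n (Y j \<omega>)) -` C j \<inter> space M \<in> events"
      by (rule measurable_sets[OF projY_meas]) simp
    show ?thesis
      by (rule sets.Int[OF sets.top], rule sets.finite_INT) (auto intro: *)
  qed
  finally show ?thesis .
qed

lemma MC_step:
  assumes "\<forall>j\<le>Suc k. B j \<in> sets (Xspace n)"
  shows "prob {\<omega> \<in> space M. \<forall>j\<le>Suc k. Y j \<omega> \<in> B j} =
      (\<integral>\<omega>. indicator {\<omega> \<in> space M. \<forall>j\<le>k. Y j \<omega> \<in> B j} \<omega> * mu n ta td eta (Y k \<omega>) (B (Suc k)) \<partial>M)"
proof -
  have "\<forall>k B. (\<forall>j\<le>Suc k. B j \<in> sets (Xspace n)) \<longrightarrow>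
        measure M {\<omega> \<in> space M. \<forall>j\<le>Suc k. Y j \<omega> \<in> B j} =
        (\<integral>\<omega>. indicator {\<omega> \<in> space M. \<forall>j\<le>k. Y j \<omega> \<in> B j} \<omega> * mu n ta td eta (Y k \<omega>) (B (Suc k)) \<partial>M)"
    using MC unfolding markov_chain_def by (elim conjE)
  then show ?thesis using assms by simp
qed

lemma E_alt: "{\<omega> \<in> space M. \<forall>j\<le>k. Y j \<omega> \<in> Bset n (C j)} = E k C"
proof -
  have "\<And>\<omega> j. \<omega> \<in> space M \<Longrightarrow> Y j \<omega> \<in> Bset n (C j) \<longleftrightarrow> proj n (Y j \<omega>) \<in> C j"
    using Y_in unfolding Bset_def proj_def by blast
  then show ?thesis unfolding E_def by blast
qed

lemma E_step:
  "prob (E (Suc k) C) = (\<integral>\<omega>. indicator (E k C) \<omega> * hat_mu n ta td (proj n (Y k \<omega>)) (C (Suc k)) \<partial>M)"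
proof -
  have "\<forall>j\<le>Suc k. Bset n (C j) \<in> sets (Xspace n)" by (simp add: Bset_sets)
  from MC_step[OF this] have "prob (E (Suc k) C) =
      (\<integral>\<omega>. indicator (E k C) \<omega> * mu n ta td eta (Y k \<omega>) (Bset n (C (Suc k))) \<partial>M)"
    unfolding E_alt .
  also have "\<dots> = (\<integral>\<omega>. indicator (E k C) \<omega> * hat_mu n ta td (proj n (Y k \<omega>)) (C (Suc k)) \<partial>M)"
  proof (rule Bochner_Integration.integral_cong[OF refl])
    fix \<omega> assume "\<omega> \<in> space M"
    then have "mu n ta td eta (Y k \<omega>) (Bset n (C (Suc k))) = hat_mu n ta td (proj n (Y k \<omega>)) (C (Suc k))"
      unfolding proj_def by (rule mu_lump[OF eta_prob eta_sets Y_in])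
    then show "indicator (E k C) \<omega> * mu n ta td eta (Y k \<omega>) (Bset n (C (Suc k))) =
          indicator (E k C) \<omega> * hat_mu n ta td (proj n (Y k \<omega>)) (C (Suc k))" by simp
  qed
  finally show ?thesis .
qed

lemma E_step_const:
  assumes "\<And>\<omega>. \<omega> \<in> E k C \<Longrightarrow> proj n (Y k \<omega>) = a"
  shows "prob (E (Suc k) C) = prob (E k C) * hat_mu n ta td a (C (Suc k))"
proof -
  have "(\<integral>\<omega>. indicator (E k C) \<omega> * hat_mu n ta td (proj n (Y k \<omega>)) (C (Suc k)) \<partial>M) =
        (\<integral>\<omega>. indicator (E k C) \<omega> * hat_mu n ta td a (C (Suc k)) \<partial>M)"
    by (rule Bochner_Integration.integral_cong[OF refl]) (auto simp: indicator_def assms)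
  also have "\<dots> = prob (E k C) * hat_mu n ta td a (C (Suc k))"
    using E_sets[of k C] by (simp add: Int_absorb2 sets.sets_into_space)
  finally show ?thesis using E_step by simp
qed

lemma E_formula:
  "prob (E k (\<lambda>j. {i j})) = prob {\<omega> \<in> space M. proj n (Y 0 \<omega>) = i 0} * (\<Prod>j<k. hat_mu n ta td (i j) {i (Suc j)})"
proof (induction k)
  case 0 then show ?case by (simp add: E_def)
next
  case (Suc k)
  have "prob (E (Suc k) (\<lambda>j. {i j})) = prob (E k (\<lambda>j. {i j})) * hat_mu n ta td (i k) {i (Suc k)}"
    by (rule E_step_const) (auto simp: E_def)
  then show ?case using Suc by simp
qed

lemma no_self_jump: "AE \<omega> in M. proj n (Y (Suc k) \<omega>) \<noteq> proj n (Y k \<omega>)"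
proof -
  define C :: "nat \<Rightarrow> nat \<Rightarrow> nat set" where "C m = (\<lambda>j. if k \<le> j then {m} else UNIV)" for m
  have "AE \<omega> in M. \<omega> \<notin> E (Suc k) (C m)" for m
  proof (rule AE_not_in)
    have "prob (E (Suc k) (C m)) = prob (E k (C m)) * hat_mu n ta td m (C m (Suc k))"
      by (rule E_step_const) (auto simp: E_def C_def)
    then have "prob (E (Suc k) (C m)) = 0" by (simp add: C_def hat_mu_self)
    then show "E (Suc k) (C m) \<in> null_sets M"
      using E_sets by (simp add: null_sets_def emeasure_eq_measure)
  qed
  then have "AE \<omega> in M. \<forall>m. \<omega> \<notin> E (Suc k) (C m)" by (simp add: AE_all_countable)
  then show ?thesis
  proof (rule AE_mp)
    show "AE \<omega> in M. (\<forall>m. \<omega> \<notin> E (Suc k) (C m)) \<longrightarrow> proj n (Y (Suc k) \<omega>) \<noteq> proj n (Y k \<omega>)"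
    proof (rule AE_I2, intro impI notI)
      fix \<omega> assume sp: "\<omega> \<in> space M" and nE: "\<forall>m. \<omega> \<notin> E (Suc k) (C m)"
        and eq: "proj n (Y (Suc k) \<omega>) = proj n (Y k \<omega>)"
      have "\<omega> \<in> E (Suc k) (C (proj n (Y k \<omega>)))"
        unfolding E_def C_def using sp eq by (auto simp: le_Suc_eq)
      with nE show False by blast
    qed
  qed
qed

end



lemma jump_time_0[simp]: "jump_time n ta td Y g 0 \<omega> = 0"
  by (simp add: jump_time_def)

lemma jump_time_Suc:
  "jump_time n ta td Y g (Suc k) \<omega> = jump_time n ta td Y g k \<omega> + g (Suc k) \<omega> / rate_c n ta td (fst (Y k \<omega>))"
  by (simp add: jump_time_def)

context P4 begin

lemma g_meas: "1 \<le> k \<Longrightarrow> \<gamma> k \<in> borel_measurable M"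
  using distributed_measurable[OF gexp] by simp

lemma rate_meas: "(\<lambda>\<omega>. rate_c n ta td (fst (Y k \<omega>))) \<in> borel_measurable M"
proof -
  have "(\<lambda>\<omega>. hat_c n ta td (proj n (Y k \<omega>))) \<in> borel_measurable M"
    by (rule measurable_compose[OF projY_meas]) simp
  then show ?thesis by (simp add: rate_c_eq proj_def)
qed

lemma tau_meas: "jump_time n ta td Y \<gamma> k \<in> borel_measurable M"
proof (induction k)
  case 0 then show ?case by (simp add: jump_time_def[abs_def])
next
  case (Suc k)
  have "(\<lambda>\<omega>. jump_time n ta td Y \<gamma> k \<omega> + \<gamma> (Suc k) \<omega> / rate_c n ta td (fst (Y k \<omega>))) \<in> borel_measurable M"
    using Suc g_meas[of "Suc k"] rate_meas[of k] by (intro borel_measurable_add borel_measurable_divide) auto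
  then show ?case by (simp add: jump_time_Suc[abs_def])
qed

lemma gind_prod:
  assumes "finite J" "J \<noteq> {}" "J \<subseteq> {1..}" "\<And>j. j \<in> J \<Longrightarrow> A j \<in> sets borel"
  shows "prob (\<Inter>j\<in>J. \<gamma> j -` A j \<inter> space M) = (\<Prod>j\<in>J. prob (\<gamma> j -` A j \<inter> space M))"
proof -
  have "indep_sets (\<lambda>i. { \<gamma> i -` A \<inter> space M | A. A \<in> sets borel}) {1..}"
    using gind unfolding indep_vars_def2 by simp
  then have "\<forall>A\<in>Pi J (\<lambda>i. { \<gamma> i -` A \<inter> space M | A. A \<in> sets borel}). prob (\<Inter>j\<in>J. A j) = (\<Prod>j\<in>J. prob (A j))"
    unfolding indep_sets_def using assms(1-3) by blast
  moreover have "(\<lambda>j. \<gamma> j -` A j \<inter> space M) \<in> Pi J (\<lambda>i. { \<gamma> i -` A \<inter> space M | A. A \<in> sets borel})"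
    using assms(4) by blast
  ultimately show ?thesis by blast
qed

lemma AE_gpos: "AE \<omega> in M. \<forall>i. 1 \<le> i \<longrightarrow> 0 < \<gamma> i \<omega>"
proof -
  have "AE \<omega> in M. 1 \<le> i \<longrightarrow> 0 < \<gamma> i \<omega>" for i
  proof (cases "1 \<le> i")
    case True
    have "prob {\<omega> \<in> space M. 0 < \<gamma> i \<omega>} = 1"
      using exponential_distributedD_gt[OF gexp[OF True], of 0] by simp
    then have "AE \<omega> in M. \<omega> \<in> {\<omega> \<in> space M. 0 < \<gamma> i \<omega>}" by (rule AE_prob_1)
    then show ?thesis by eventually_elim auto
  qed simp
  then show ?thesis by (simp add: AE_all_countable)
qed

lemma AE_inf: "AE \<omega> in M. \<forall>m. \<exists>i\<ge>Suc m. 1 < \<gamma> i \<omega>"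
proof -
  define q :: real where "q = 1 - exp (- 1)"
  have q: "0 \<le> q" "q < 1" unfolding q_def by auto
  have "AE \<omega> in M. \<omega> \<notin> {\<omega> \<in> space M. \<forall>i\<ge>Suc m. \<gamma> i \<omega> \<le> 1}" for m
  proof (rule AE_not_in)
    define N where "N = {\<omega> \<in> space M. \<forall>i\<ge>Suc m. \<gamma> i \<omega> \<le> 1}"
    have Nm: "N \<in> events"
    proof -
      have "N = space M \<inter> (\<Inter>i\<in>{Suc m..}. \<gamma> i -` {..1} \<inter> space M)" by (auto simp: N_def)
      also have "\<dots> \<in> events"
        using g_meas by (intro sets.Int sets.top sets.countable_INT) (auto intro!: measurable_sets[OF g_meas])
      finally show ?thesis .
    qed
    have "prob N \<le> q ^ Suc K" for K
    proof -
      have ev: "(\<Inter>j\<in>{Suc m..Suc m + K}. \<gamma> j -` {..1} \<inter> space M) \<in> events"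
        by (rule sets.finite_INT) (auto intro: measurable_sets[OF g_meas])
      have "prob N \<le> prob (\<Inter>j\<in>{Suc m..Suc m + K}. \<gamma> j -` {..1} \<inter> space M)"
        by (rule finite_measure_mono[OF _ ev]) (auto simp: N_def)
      also have "\<dots> = (\<Prod>j\<in>{Suc m..Suc m + K}. prob (\<gamma> j -` {..1} \<inter> space M))"
        by (rule gind_prod) auto
      also have "\<dots> = (\<Prod>j\<in>{Suc m..Suc m + K}. q)"
      proof (rule prod.cong[OF refl])
        fix j assume "j \<in> {Suc m..Suc m + K}"
        then have "1 \<le> j" by simp
        have "prob (\<gamma> j -` {..1} \<inter> space M) = prob {x \<in> space M. \<gamma> j x \<le> 1}"
          by (rule arg_cong[where f=prob]) auto
        also have "\<dots> = q" using exponential_distributedD_le[OF gexp[OF \<open>1 \<le> j\<close>], of 1] by (simp add: q_def)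
        finally show "prob (\<gamma> j -` {..1} \<inter> space M) = q" .
      qed
      also have "\<dots> = q ^ Suc K" by simp
      finally show ?thesis .
    qed
    moreover have "(\<lambda>K. q ^ Suc K) \<longlonglongrightarrow> 0"
      using LIMSEQ_Suc[OF LIMSEQ_power_zero[of q]] q by simp
    ultimately have "prob N \<le> 0"
      by (intro tendsto_le[OF _ _ tendsto_const]) auto
    then have "prob N = 0" using measure_nonneg[of M N] by linarith
    then show "N \<in> null_sets M" using Nm by (simp add: null_sets_def emeasure_eq_measure)
  qed
  then have "AE \<omega> in M. \<forall>m. \<omega> \<notin> {\<omega> \<in> space M. \<forall>i\<ge>Suc m. \<gamma> i \<omega> \<le> 1}" by (simp add: AE_all_countable)
  then show ?thesis
    by (rule AE_mp) (rule AE_I2, auto simp: not_le)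
qed

end



lemma rate_bounds:
  assumes "0 < ta" "0 < td" "0 < n"
  shows "0 < rate_c n ta td psi" "rate_c n ta td psi \<le> (ta + td) * real n"
  using hat_c_pos[OF assms(3,1,2)] hat_c_le[OF assms(1,2) card_psi_le] by (simp_all add: rate_c_eq)

lemma pathwise:
  fixes g :: "nat \<Rightarrow> 'w \<Rightarrow> real" and Y :: "nat \<Rightarrow> 'w \<Rightarrow> ('N::finite) state"
  assumes ta: "0 < ta" and td: "0 < td" and np: "0 < n"
    and gpos: "\<forall>i. 1 \<le> i \<longrightarrow> 0 < g i \<omega>"
    and ginf: "\<forall>m. \<exists>i\<ge>Suc m. 1 < g i \<omega>"
  shows "strict_mono (\<lambda>k. jump_time n ta td Y g k \<omega>)"
    and "filterlim (\<lambda>k. jump_time n ta td Y g k \<omega>) at_top sequentially"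
    and "\<And>k t. jump_time n ta td Y g k \<omega> \<le> t \<Longrightarrow> t < jump_time n ta td Y g (Suc k) \<omega> \<Longrightarrow>
           Xproc n ta td Y g t \<omega> = Y k \<omega>"
proof -
  define \<tau> where "\<tau> = (\<lambda>k. jump_time n ta td Y g k \<omega>)"
  define C where "C = (ta + td) * real n"
  have Cpos: "0 < C" unfolding C_def using ta td np by simp
  have rb: "0 < rate_c n ta td psi" "rate_c n ta td psi \<le> C" for psi
    using rate_bounds[OF ta td np] unfolding C_def by auto
  have tS: "\<tau> (Suc k) = \<tau> k + g (Suc k) \<omega> / rate_c n ta td (fst (Y k \<omega>))" for k
    unfolding \<tau>_def by (rule jump_time_Suc)
  have sm: "strict_mono \<tau>"
  proof (rule strict_monoI_Suc)
    fix k
    have "0 < g (Suc k) \<omega> / rate_c n ta td (fst (Y k \<omega>))"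
      using gpos rb(1) by (intro divide_pos_pos) auto
    then show "\<tau> k < \<tau> (Suc k)" using tS by simp
  qed
  then have mono: "k \<le> k' \<Longrightarrow> \<tau> k \<le> \<tau> k'" for k k' by (simp add: strict_mono_less_eq)
  have unb: "\<exists>k. real N / C \<le> \<tau> k" for N
  proof (induction N)
    case 0 then show ?case by (auto simp: \<tau>_def intro: exI[of _ 0])
  next
    case (Suc N)
    then obtain k where k: "real N / C \<le> \<tau> k" by blast
    obtain i where i: "i \<ge> Suc k" "1 < g i \<omega>" using ginf by blast
    then obtain i' where i': "i = Suc i'" "k \<le> i'" by (cases i) auto
    have r: "0 < rate_c n ta td (fst (Y i' \<omega>))" "rate_c n ta td (fst (Y i' \<omega>)) \<le> C" using rb by auto
    have "1 / C \<le> 1 / rate_c n ta td (fst (Y i' \<omega>))"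
      using r by (intro divide_left_mono) auto
    also have "\<dots> \<le> g (Suc i') \<omega> / rate_c n ta td (fst (Y i' \<omega>))"
      using r i i' by (intro divide_right_mono) auto
    finally have "\<tau> k + 1 / C \<le> \<tau> (Suc i')" using tS[of i'] mono[OF i'(2)] by simp
    moreover have "real (Suc N) / C = real N / C + 1 / C" by (simp add: add_divide_distrib)
    ultimately show ?case using k by (intro exI[of _ "Suc i'"]) simp
  qed
  have fl: "filterlim \<tau> at_top sequentially"
  proof (subst filterlim_at_top, intro allI)
    fix Z :: real
    obtain N :: nat where N: "Z * C \<le> real N" using real_arch_simple by blast
    obtain k where k: "real N / C \<le> \<tau> k" using unb by blast
    have "Z \<le> real N / C" using N Cpos by (simp add: field_simps)
    then show "eventually (\<lambda>x. Z \<le> \<tau> x) sequentially"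
      unfolding eventually_sequentially using k mono by (meson order_trans)
  qed
  show "strict_mono (\<lambda>k. jump_time n ta td Y g k \<omega>)" using sm unfolding \<tau>_def .
  show "filterlim (\<lambda>k. jump_time n ta td Y g k \<omega>) at_top sequentially" using fl unfolding \<tau>_def .
  fix k t assume a: "jump_time n ta td Y g k \<omega> \<le> t" "t < jump_time n ta td Y g (Suc k) \<omega>"
  have L: "(LEAST k'. t < \<tau> (Suc k')) = k"
  proof (rule Least_equality)
    show "t < \<tau> (Suc k)" using a unfolding \<tau>_def by simp
    fix y assume "t < \<tau> (Suc y)"
    show "k \<le> y"
    proof (rule ccontr)
      assume "\<not> k \<le> y"
      then have "\<tau> (Suc y) \<le> \<tau> k" by (intro mono) simp
      then show False using a \<open>t < \<tau> (Suc y)\<close> unfolding \<tau>_def by simp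
    qed
  qed
  have "\<exists>k'. t < \<tau> (Suc k')" using a unfolding \<tau>_def by blast
  then show "Xproc n ta td Y g t \<omega> = Y k \<omega>"
    using L unfolding Xproc_def Let_def \<tau>_def by simp
qed




lemma sets_all_le:
  fixes P :: "nat \<Rightarrow> 'a \<Rightarrow> bool"
  assumes a: "\<And>j. {x \<in> space N. P j x} \<in> sets N"
  shows "{x \<in> space N. \<forall>j\<le>k. P j x} \<in> sets N"
proof -
  have "{x \<in> space N. \<forall>j\<le>k. P j x} = space N \<inter> (\<Inter>j\<in>{..k}. {x \<in> space N. P j x})" by auto
  also have "\<dots> \<in> sets N"
    by (rule sets.Int[OF sets.top], rule sets.finite_INT) (simp_all add: a)
  finally show ?thesis .
qed

lemma sets_all_less:
  fixes P :: "nat \<Rightarrow> 'a \<Rightarrow> bool"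
  assumes a: "\<And>j. {x \<in> space N. P j x} \<in> sets N"
  shows "{x \<in> space N. \<forall>j<k. P j x} \<in> sets N"
proof (cases "k = 0")
  case True
  then show ?thesis by simp
next
  case False
  have "{x \<in> space N. \<forall>j<k. P j x} = space N \<inter> (\<Inter>j\<in>{..<k}. {x \<in> space N. P j x})" by auto
  also have "\<dots> \<in> sets N"
    by (rule sets.Int[OF sets.top], rule sets.finite_INT) (use False in \<open>auto simp: a\<close>)
  finally show ?thesis .
qed

lemma sets_eq_nat:
  assumes "f \<in> measurable N (count_space UNIV)"
  shows "{x \<in> space N. f x = (a::nat)} \<in> sets N"
proof -
  have "f -` {a} \<inter> space N \<in> sets N" by (rule measurable_sets[OF assms]) simp
  moreover have "f -` {a} \<inter> space N = {x \<in> space N. f x = a}" by auto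
  ultimately show ?thesis by simp
qed

lemma meas_to_finite:
  assumes "f \<in> measurable N (count_space UNIV)" "\<And>x. f x \<le> (n::nat)"
  shows "f \<in> measurable N (count_space {0..n})"
  unfolding measurable_count_space_eq2[OF finite_atLeastAtMost]
  using assms measurable_sets[OF assms(1)] by auto

lemma proj_le: "proj n x \<le> n"
  unfolding proj_def by (rule card_psi_le)

context P4 begin

lemma Zmeas:
  assumes T: "T \<in> borel_measurable M"
  shows "(\<lambda>\<omega>. proj n (Xproc n ta td Y \<gamma> (T \<omega>) \<omega>)) \<in> measurable M (count_space UNIV)"
proof -
  let ?\<tau> = "\<lambda>k. jump_time n ta td Y \<gamma> k"
  have eq: "(\<lambda>\<omega>. proj n (Xproc n ta td Y \<gamma> (T \<omega>) \<omega>)) =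
    (\<lambda>\<omega>. if \<exists>k. T \<omega> < ?\<tau> (Suc k) \<omega> then (\<lambda>i \<omega>. proj n (Y i \<omega>)) (LEAST k. T \<omega> < ?\<tau> (Suc k) \<omega>) \<omega>
          else proj n (Y 0 \<omega>))"
    by (simp add: Xproc_def Let_def fun_eq_iff)
  have lt: "{\<omega> \<in> space M. T \<omega> < ?\<tau> (Suc k) \<omega>} \<in> events" for k
    by (rule borel_measurable_less[OF T tau_meas])
  have ex: "{\<omega> \<in> space M. \<exists>k. T \<omega> < ?\<tau> (Suc k) \<omega>} \<in> events"
    by (rule sets.sets_Collect_countable_Ex) (rule lt)
  have least: "(\<lambda>\<omega>. LEAST k. T \<omega> < ?\<tau> (Suc k) \<omega>) \<in> measurable M (count_space UNIV)"
  proof (rule measurable_Least)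
    fix i
    show "(\<lambda>\<omega>. T \<omega> < ?\<tau> (Suc i) \<omega>) \<in> measurable M (count_space UNIV)"
      unfolding pred_def[symmetric] using lt[of i] by (simp add: pred_def measurable_count_space_eq2_countable)
  qed
  show ?thesis unfolding eq
    by (rule measurable_If[OF measurable_compose_countable[OF projY_meas least] projY_meas ex])
qed

lemma nu_eq:
  assumes a: "a \<in> {0..n}"
  shows "measure (distr rho (count_space {0..n}) (proj n)) {a} = prob {\<omega> \<in> space M. proj n (Y 0 \<omega>) = a}"
proof -
  have rho: "rho = distr M (Xspace n) (Y 0)" using MC unfolding markov_chain_def by simp
  have pm: "proj n \<in> measurable (Xspace n) (count_space {0..n})"
    by (rule meas_to_finite[OF proj_meas proj_le])
  then have pm': "proj n \<in> measurable rho (count_space {0..n})"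
    using measurable_cong_sets[OF rho_sets, of "count_space {0..n}" "count_space {0..n}"] by simp
  have sp: "space rho = Xset n" using sets_eq_imp_space_eq[OF rho_sets] space_Xspace by simp
  have "measure (distr rho (count_space {0..n}) (proj n)) {a} = measure rho (proj n -` {a} \<inter> space rho)"
    using a by (intro measure_distr[OF pm']) auto
  also have "\<dots> = prob (Y 0 -` (proj n -` {a} \<inter> space rho) \<inter> space M)"
  proof -
    have "proj n -` {a} \<inter> space (Xspace n) \<in> sets (Xspace n)"
      by (rule measurable_sets[OF pm]) (use a in simp)
    moreover have "space rho = space (Xspace n)" using sets_eq_imp_space_eq[OF rho_sets] .
    ultimately have "proj n -` {a} \<inter> space rho \<in> sets (Xspace n)" by simp
    then show ?thesis by (subst rho) (rule measure_distr[OF Y_meas])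
  qed
  also have "Y 0 -` (proj n -` {a} \<inter> space rho) \<inter> space M = {\<omega> \<in> space M. proj n (Y 0 \<omega>) = a}"
    using Y_in sp by auto
  finally show ?thesis .
qed

end



context P4 begin

abbreviation "J \<equiv> jump_time n ta td Y \<gamma>"
abbreviation "Zf \<equiv> (\<lambda>t \<omega>. proj n (Xproc n ta td Y \<gamma> t \<omega>))"

definition good :: "'w \<Rightarrow> bool" where
  "good \<omega> \<longleftrightarrow> (\<forall>i. 1 \<le> i \<longrightarrow> 0 < \<gamma> i \<omega>) \<and> (\<forall>m. \<exists>i\<ge>Suc m. 1 < \<gamma> i \<omega>) \<and>
     (\<forall>k. proj n (Y (Suc k) \<omega>) \<noteq> proj n (Y k \<omega>))"

lemma AE_good: "AE \<omega> in M. good \<omega>"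
proof -
  have "AE \<omega> in M. \<forall>k. proj n (Y (Suc k) \<omega>) \<noteq> proj n (Y k \<omega>)"
    using no_self_jump by (simp add: AE_all_countable)
  with AE_gpos AE_inf show ?thesis unfolding good_def by eventually_elim auto
qed

lemma good_props:
  assumes "good \<omega>"
  shows "strict_mono (\<lambda>k. J k \<omega>)" "filterlim (\<lambda>k. J k \<omega>) at_top sequentially"
    "\<And>k t. J k \<omega> \<le> t \<Longrightarrow> t < J (Suc k) \<omega> \<Longrightarrow> Zf t \<omega> = proj n (Y k \<omega>)"
    "\<And>k. Zf (J k \<omega>) \<omega> = proj n (Y k \<omega>)"
proof -
  have g1: "\<forall>i. 1 \<le> i \<longrightarrow> 0 < \<gamma> i \<omega>" and g2: "\<forall>m. \<exists>i\<ge>Suc m. 1 < \<gamma> i \<omega>"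
    using assms unfolding good_def by auto
  note pw = pathwise[where g=\<gamma> and \<omega>=\<omega> and Y=Y, OF ta td npos g1 g2]
  show sm: "strict_mono (\<lambda>k. J k \<omega>)" by (rule pw(1))
  show "filterlim (\<lambda>k. J k \<omega>) at_top sequentially" by (rule pw(2))
  show "\<And>k t. J k \<omega> \<le> t \<Longrightarrow> t < J (Suc k) \<omega> \<Longrightarrow> Zf t \<omega> = proj n (Y k \<omega>)"
    using pw(3) by simp
  fix k
  have "J k \<omega> < J (Suc k) \<omega>" using sm by (simp add: strict_mono_def)
  then show "Zf (J k \<omega>) \<omega> = proj n (Y k \<omega>)" using pw(3)[of k "J k \<omega>"] by simp
qed

lemma J_diff:
  "J (Suc j) \<omega> - J j \<omega> = \<gamma> (Suc j) \<omega> / hat_c n ta td (proj n (Y j \<omega>))"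
  by (simp add: jump_time_Suc rate_c_eq proj_def)

lemma prob_G:
  assumes s: "\<forall>j. 0 \<le> s j"
  shows "prob {\<omega> \<in> space M. \<forall>j<k. hat_c n ta td (i j) * s j < \<gamma> (Suc j) \<omega>} =
         (\<Prod>j<k. exp (- (hat_c n ta td (i j) * s j)))"
proof (cases "k = 0")
  case True then show ?thesis by (simp add: prob_space)
next
  case False
  define c where "c j = hat_c n ta td (i j) * s j" for j
  have c0: "0 \<le> c j" for j unfolding c_def using hat_c_pos[OF npos ta td] s by (simp add: less_imp_le)
  have "{\<omega> \<in> space M. \<forall>j<k. c j < \<gamma> (Suc j) \<omega>} = (\<Inter>j'\<in>Suc ` {..<k}. \<gamma> j' -` {c (j' - 1)<..} \<inter> space M)"
    using False by auto
  also have "prob \<dots> = (\<Prod>j'\<in>Suc ` {..<k}. prob (\<gamma> j' -` {c (j' - 1)<..} \<inter> space M))"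
    by (rule gind_prod) (use False in auto)
  also have "\<dots> = (\<Prod>j<k. prob (\<gamma> (Suc j) -` {c j<..} \<inter> space M))"
    by (subst prod.reindex) auto
  also have "\<dots> = (\<Prod>j<k. exp (- c j))"
  proof (rule prod.cong[OF refl])
    fix j
    have "prob (\<gamma> (Suc j) -` {c j<..} \<inter> space M) = prob {x \<in> space M. c j < \<gamma> (Suc j) x}"
      by (rule arg_cong[where f=prob]) auto
    also have "\<dots> = exp (- c j)"
      using exponential_distributedD_gt[OF gexp[of "Suc j"] c0[of j]] by simp
    finally show "prob (\<gamma> (Suc j) -` {c j<..} \<inter> space M) = exp (- c j)" .
  qed
  finally show ?thesis unfolding c_def .
qed

end



context P4 begin

lemma formula:
  assumes i: "\<forall>j\<le>k. i j \<in> {0..n}" and s: "\<forall>j. 0 \<le> s j"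
  shows "measure M {\<omega> \<in> space M. (\<forall>j\<le>k. Zf (J j \<omega>) \<omega> = i j) \<and> (\<forall>j<k. J (Suc j) \<omega> - J j \<omega> > s j)}
     = measure (distr rho (count_space {0..n}) (proj n)) {i 0} *
       (\<Prod>j<k. (hat_alpha n ta td (i j) {i (Suc j)} / hat_alpha n ta td (i j) {0..n}) *
                exp (- hat_alpha n ta td (i j) {0..n} * s j))"
proof -
  define c where "c j = hat_c n ta td (i j)" for j
  have cpos: "0 < c j" for j unfolding c_def by (rule hat_c_pos[OF npos ta td])
  define Ev where "Ev = {\<omega> \<in> space M. (\<forall>j\<le>k. Zf (J j \<omega>) \<omega> = i j) \<and> (\<forall>j<k. J (Suc j) \<omega> - J j \<omega> > s j)}"
  define Ev' where "Ev' = {\<omega> \<in> space M. (\<forall>j\<le>k. proj n (Y j \<omega>) = i j) \<and> (\<forall>j<k. c j * s j < \<gamma> (Suc j) \<omega>)}"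
  define G where "G = {\<omega> \<in> space M. \<forall>j<k. c j * s j < \<gamma> (Suc j) \<omega>}"
  have Ev_sets: "Ev \<in> events"
  proof -
    have "{\<omega> \<in> space M. \<forall>j\<le>k. Zf (J j \<omega>) \<omega> = i j} \<in> events"
      by (rule sets_all_le, rule sets_eq_nat, rule Zmeas, rule tau_meas)
    moreover have "{\<omega> \<in> space M. \<forall>j<k. J (Suc j) \<omega> - J j \<omega> > s j} \<in> events"
      by (rule sets_all_less, rule borel_measurable_less)
         (auto intro!: borel_measurable_diff tau_meas)
    ultimately have "{\<omega> \<in> space M. \<forall>j\<le>k. Zf (J j \<omega>) \<omega> = i j} \<inter> {\<omega> \<in> space M. \<forall>j<k. J (Suc j) \<omega> - J j \<omega> > s j} \<in> events"
      by (rule sets.Int)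
    moreover have "{\<omega> \<in> space M. \<forall>j\<le>k. Zf (J j \<omega>) \<omega> = i j} \<inter> {\<omega> \<in> space M. \<forall>j<k. J (Suc j) \<omega> - J j \<omega> > s j} = Ev"
      unfolding Ev_def by blast
    ultimately show ?thesis by simp
  qed
  have G_sets: "G \<in> events"
    unfolding G_def by (rule sets_all_less, rule borel_measurable_less) (auto intro!: g_meas)
  have Ev'_eq: "Ev' = E k (\<lambda>j. {i j}) \<inter> G"
    unfolding Ev'_def E_def G_def by auto
  have Ev'_sets: "Ev' \<in> events" unfolding Ev'_eq using E_sets G_sets by (rule sets.Int)
  have "measure M Ev = measure M Ev'"
  proof (rule measure_eq_AE[OF _ Ev_sets Ev'_sets])
    show "AE \<omega> in M. (\<omega> \<in> Ev) = (\<omega> \<in> Ev')"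
      using AE_good
    proof eventually_elim
      case (elim \<omega>)
      note gp = good_props[OF elim]
      have "(\<forall>j\<le>k. Zf (J j \<omega>) \<omega> = i j) \<longleftrightarrow> (\<forall>j\<le>k. proj n (Y j \<omega>) = i j)"
        using gp(4) by simp
      moreover have "(\<forall>j<k. J (Suc j) \<omega> - J j \<omega> > s j) \<longleftrightarrow> (\<forall>j<k. c j * s j < \<gamma> (Suc j) \<omega>)"
        if h: "\<forall>j\<le>k. proj n (Y j \<omega>) = i j"
      proof -
        have "J (Suc j) \<omega> - J j \<omega> > s j \<longleftrightarrow> c j * s j < \<gamma> (Suc j) \<omega>" if "j < k" for j
        proof -
          have "proj n (Y j \<omega>) = i j" using h that by simp
          then have "J (Suc j) \<omega> - J j \<omega> = \<gamma> (Suc j) \<omega> / c j" unfolding J_diff c_def by simp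
          then show ?thesis using cpos[of j] by (simp add: pos_less_divide_eq mult.commute)
        qed
        then show ?thesis by auto
      qed
      ultimately show ?case unfolding Ev_def Ev'_def by blast
    qed
  qed
  also have "measure M Ev' = prob (E k (\<lambda>j. {i j})) * prob G"
  proof -
    define A :: "(nat \<Rightarrow> 'N state) set" where "A = {y \<in> space (Pi\<^sub>M UNIV (\<lambda>_. Xspace n)). \<forall>j\<le>k. proj n (y j) = i j}"
    define B where "B = {g \<in> space (Pi\<^sub>M {1..} (\<lambda>_. borel)). \<forall>j<k. c j * s j < g (Suc j)}"
    have A: "A \<in> sets (Pi\<^sub>M UNIV (\<lambda>_. Xspace n))"
    proof -
      have comp: "(\<lambda>y. y j) \<in> measurable (Pi\<^sub>M UNIV (\<lambda>_. Xspace n)) (Xspace n)" for j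
        by (rule measurable_component_singleton) simp
      show ?thesis unfolding A_def
        by (rule sets_all_le, rule sets_eq_nat, rule measurable_compose[OF comp proj_meas])
    qed
    have B: "B \<in> sets (Pi\<^sub>M {1..} (\<lambda>_. borel))"
      unfolding B_def
      by (rule sets_all_less, rule borel_measurable_less) (auto intro!: measurable_component_singleton)
    have Ysp: "(\<lambda>k. Y k \<omega>) \<in> space (Pi\<^sub>M UNIV (\<lambda>_. Xspace n))" if "\<omega> \<in> space M" for \<omega>
      using Y_in[OF that] by (simp add: space_PiM space_Xspace PiE_iff)
    have gsp: "(\<lambda>k\<in>{1..}. \<gamma> k \<omega>) \<in> space (Pi\<^sub>M {1..} (\<lambda>_. borel))" for \<omega>
      by (simp add: space_PiM)
    have e1: "{\<omega> \<in> space M. (\<lambda>k. Y k \<omega>) \<in> A \<and> (\<lambda>k\<in>{1..}. \<gamma> k \<omega>) \<in> B} = Ev'"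
      unfolding Ev'_def A_def B_def using Ysp gsp by auto
    have e2: "{\<omega> \<in> space M. (\<lambda>k. Y k \<omega>) \<in> A} = E k (\<lambda>j. {i j})"
      unfolding E_def A_def using Ysp by auto
    have e3: "{\<omega> \<in> space M. (\<lambda>k\<in>{1..}. \<gamma> k \<omega>) \<in> B} = G"
      unfolding G_def B_def using gsp by auto
    show ?thesis using YGind[OF A B] unfolding e1 e2 e3 .
  qed
  also have "prob (E k (\<lambda>j. {i j})) = prob {\<omega> \<in> space M. proj n (Y 0 \<omega>) = i 0} * (\<Prod>j<k. hat_mu n ta td (i j) {i (Suc j)})"
    by (rule E_formula)
  also have "prob G = (\<Prod>j<k. exp (- (c j * s j)))"
    unfolding G_def c_def by (rule prob_G[OF s])
  also have "prob {\<omega> \<in> space M. proj n (Y 0 \<omega>) = i 0} = measure (distr rho (count_space {0..n}) (proj n)) {i 0}"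
    using nu_eq[of "i 0"] i by simp
  finally have fin: "prob Ev = measure (distr rho (count_space {0..n}) (proj n)) {i 0} *
     (\<Prod>j<k. hat_mu n ta td (i j) {i (Suc j)}) * (\<Prod>j<k. exp (- (c j * s j)))" .
  have PQ: "(\<Prod>j<k. hat_mu n ta td (i j) {i (Suc j)}) * (\<Prod>j<k. exp (- (c j * s j))) =
      (\<Prod>j<k. (hat_alpha n ta td (i j) {i (Suc j)} / hat_alpha n ta td (i j) {0..n}) *
                exp (- hat_alpha n ta td (i j) {0..n} * s j))"
    unfolding prod.distrib[symmetric]
  proof (rule prod.cong[OF refl])
    fix j assume "j \<in> {..<k}"
    then have "i j \<le> n" using i by auto
    then show "hat_mu n ta td (i j) {i (Suc j)} * exp (- (c j * s j)) =
      (hat_alpha n ta td (i j) {i (Suc j)} / hat_alpha n ta td (i j) {0..n}) *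
                exp (- hat_alpha n ta td (i j) {0..n} * s j)"
      using hat_alpha_ratio[OF npos ta td, of "i j"] hat_alpha_S[OF npos ta td, of "i j"] unfolding c_def by simp
  qed
  show ?thesis using fin PQ unfolding Ev_def by (simp add: mult.assoc)
qed

lemma main:
  "pure_jump_markov M (\<lambda>t \<omega>. proj n (Xproc n ta td Y \<gamma> t \<omega>)) {0..n}
           (hat_alpha n ta td) (distr rho (count_space {0..n}) (proj n))"
proof -
  have P1: "prob_space M" by (rule prob_spaceI[OF emeasure_space_1])
  have P2: "\<forall>t\<ge>0. (\<lambda>\<omega>. proj n (Xproc n ta td Y \<gamma> t \<omega>)) \<in> measurable M (count_space {0..n})"
    by (intro allI impI meas_to_finite[OF Zmeas] proj_le) simp
  have P3: "\<forall>k. J k \<in> borel_measurable M" using tau_meas by blast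
  have P4: "AE \<omega> in M. J 0 \<omega> = 0 \<and> (\<forall>k. J k \<omega> < J (Suc k) \<omega>) \<and>
           filterlim (\<lambda>k. J k \<omega>) at_top sequentially \<and>
           (\<forall>k t. J k \<omega> \<le> t \<and> t < J (Suc k) \<omega> \<longrightarrow> Zf t \<omega> = Zf (J k \<omega>) \<omega>) \<and>
           (\<forall>k. Zf (J (Suc k) \<omega>) \<omega> \<noteq> Zf (J k \<omega>) \<omega>)"
    using AE_good
  proof eventually_elim
    case (elim \<omega>)
    note gp = good_props[OF elim]
    have "\<forall>k. J k \<omega> < J (Suc k) \<omega>" using gp(1) by (simp add: strict_mono_def)
    moreover have "\<forall>k. Zf (J (Suc k) \<omega>) \<omega> \<noteq> Zf (J k \<omega>) \<omega>"
      using elim gp(4) unfolding good_def by simp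
    moreover have "\<forall>k t. J k \<omega> \<le> t \<and> t < J (Suc k) \<omega> \<longrightarrow> Zf t \<omega> = Zf (J k \<omega>) \<omega>"
      using gp(3,4) by simp
    ultimately show ?case using gp(2) by simp
  qed
  have P5: "\<forall>k (i :: nat \<Rightarrow> nat) (s :: nat \<Rightarrow> real). (\<forall>j\<le>k. i j \<in> {0..n}) \<longrightarrow> (\<forall>j. 0 \<le> s j) \<longrightarrow>
           measure M {\<omega> \<in> space M. (\<forall>j\<le>k. Zf (J j \<omega>) \<omega> = i j) \<and>
                                    (\<forall>j<k. J (Suc j) \<omega> - J j \<omega> > s j)}
           = measure (distr rho (count_space {0..n}) (proj n)) {i 0} *
             (\<Prod>j<k. (hat_alpha n ta td (i j) {i (Suc j)} / hat_alpha n ta td (i j) {0..n}) * exp (- hat_alpha n ta td (i j) {0..n} * s j))"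
    using formula by blast
  show ?thesis unfolding pure_jump_markov_def
    by (rule conjI[OF P1], rule conjI[OF P2], rule exI[of _ J], intro conjI P3 P4 P5)
qed

end

theorem proposition4:
  fixes n :: nat and ta td :: real
    and eta :: "(real ^ 'N) measure"
    and rho :: "'N state measure"
    and M :: "'w measure"
    and Y :: "nat \<Rightarrow> 'w \<Rightarrow> 'N state"
    and \<gamma> :: "nat \<Rightarrow> 'w \<Rightarrow> real"
  assumes "0 < ta" and "0 < td" and "0 < n"
    and "prob_space eta" and "sets eta = sets borel" and "integrable eta (\<lambda>x. x)"
    and "prob_space rho" and "sets rho = sets (Xspace n)"
    and "prob_space M"
    and "markov_chain M (Xspace n) (mu n ta td eta) rho Y"
    and "\<And>k. 1 \<le> k \<Longrightarrow> distributed M lborel (\<gamma> k) (exponential_density 1)"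
    and "prob_space.indep_vars M (\<lambda>_. borel) \<gamma> {1..}"
    and "\<And>A B. A \<in> sets (Pi\<^sub>M UNIV (\<lambda>_. Xspace n)) \<Longrightarrow> B \<in> sets (Pi\<^sub>M {1..} (\<lambda>_. borel)) \<Longrightarrow>
           measure M {\<omega> \<in> space M. (\<lambda>k. Y k \<omega>) \<in> A \<and> (\<lambda>k\<in>{1..}. \<gamma> k \<omega>) \<in> B}
           = measure M {\<omega> \<in> space M. (\<lambda>k. Y k \<omega>) \<in> A} * measure M {\<omega> \<in> space M. (\<lambda>k\<in>{1..}. \<gamma> k \<omega>) \<in> B}"
  shows "pure_jump_markov M (\<lambda>t \<omega>. proj n (Xproc n ta td Y \<gamma> t \<omega>)) {0..n}
           (hat_alpha n ta td) (distr rho (count_space {0..n}) (proj n))"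
  proof -
  interpret P4 M n ta td eta rho Y \<gamma>
    by (rule P4.intro[OF assms(9)], rule P4_axioms.intro) (rule assms; assumption)+
  show ?thesis by (rule main)
qed

end
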